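(* If $p,q\in\mathbf P(S)$ for a DRC-semigroup $S$, and $pq=qp$, then (i) the meet $p\wedge q$ exists in the poset $(\mathbf P(S),\le)$ and $p\wedge q=pq=qp$; (ii) $p\,\mathscr F\,q\iff p=q$.
   Context: A DRC-semigroup is $(S,\cdot,D,R)$, $(S,\cdot)$ a semigroup, $D,R:S\to S$ with, for all $a,b$: $D(a)a=a$, $aR(a)=a$; $D(ab)=D(aD(b))$, $R(ab)=R(R(a)b)$; $D(ab)=D(a)D(ab)D(a)$, $R(ab)=R(b)R(ab)R(b)$; $R(D(a))=D(a)$, $D(R(a))=R(a)$. $\mathbf P(S)=\{D(a):a\in S\}$, partially ordered by $p\le q\iff p=pq=qp$. For $p,q\in\mathbf P(S)$: $q\theta_p=R(qp)$, $q\delta_p=D(pq)$, and $p\,\mathscr F\,q$ means $p=q\delta_p$ and $q=p\theta_q$. *)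

theory Defs
  imports Main
begin

definition drc_semigroup :: "('a \<Rightarrow> 'a \<Rightarrow> 'a) \<Rightarrow> ('a \<Rightarrow> 'a) \<Rightarrow> ('a \<Rightarrow> 'a) \<Rightarrow> bool" where
  "drc_semigroup m D R \<longleftrightarrow>
     (\<forall>a b c. m (m a b) c = m a (m b c)) \<and>
     (\<forall>a. m (D a) a = a) \<and> (\<forall>a. m a (R a) = a) \<and>
     (\<forall>a b. D (m a b) = D (m a (D b))) \<and> (\<forall>a b. R (m a b) = R (m (R a) b)) \<and>
     (\<forall>a b. D (m a b) = m (m (D a) (D (m a b))) (D a)) \<and>
     (\<forall>a b. R (m a b) = m (m (R b) (R (m a b))) (R b)) \<and>
     (\<forall>a. R (D a) = D a) \<and> (\<forall>a. D (R a) = R a)"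

definition projs :: "('a \<Rightarrow> 'a) \<Rightarrow> 'a set" where
  "projs D = range D"

definition proj_le :: "('a \<Rightarrow> 'a \<Rightarrow> 'a) \<Rightarrow> 'a \<Rightarrow> 'a \<Rightarrow> bool" where
  "proj_le m p q \<longleftrightarrow> p = m p q \<and> p = m q p"

definition is_meet :: "('a \<Rightarrow> 'a \<Rightarrow> 'a) \<Rightarrow> ('a \<Rightarrow> 'a) \<Rightarrow> 'a \<Rightarrow> 'a \<Rightarrow> 'a \<Rightarrow> bool" where
  "is_meet m D p q z \<longleftrightarrow>
     z \<in> projs D \<and> proj_le m z p \<and> proj_le m z q \<and>
     (\<forall>w\<in>projs D. proj_le m w p \<and> proj_le m w q \<longrightarrow> proj_le m w z)"

text \<open>q theta_p = R(qp),  q delta_p = D(pq).\<close>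
definition theta :: "('a \<Rightarrow> 'a \<Rightarrow> 'a) \<Rightarrow> ('a \<Rightarrow> 'a) \<Rightarrow> 'a \<Rightarrow> 'a \<Rightarrow> 'a" where
  "theta m R q p = R (m q p)"

definition delta :: "('a \<Rightarrow> 'a \<Rightarrow> 'a) \<Rightarrow> ('a \<Rightarrow> 'a) \<Rightarrow> 'a \<Rightarrow> 'a \<Rightarrow> 'a" where
  "delta m D q p = D (m p q)"

definition relF :: "('a \<Rightarrow> 'a \<Rightarrow> 'a) \<Rightarrow> ('a \<Rightarrow> 'a) \<Rightarrow> ('a \<Rightarrow> 'a) \<Rightarrow> 'a \<Rightarrow> 'a \<Rightarrow> bool" where
  "relF m D R p q \<longleftrightarrow> p = delta m D q p \<and> q = theta m R p q"

end

theory Submission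
  imports Defs
begin

theorem corollary10p2:
  fixes m :: "'a \<Rightarrow> 'a \<Rightarrow> 'a" and D R :: "'a \<Rightarrow> 'a" and p q :: 'a
  assumes "drc_semigroup m D R"
    and "p \<in> projs D" and "q \<in> projs D"
    and "m p q = m q p"
  shows "(\<exists>z. is_meet m D p q z) \<and> is_meet m D p q (m p q) \<and> is_meet m D p q (m q p)
         \<and> (relF m D R p q \<longleftrightarrow> p = q)"
proof -
  note S = assms(1)[unfolded drc_semigroup_def]
  have assoc: "\<And>a b c. m (m a b) c = m a (m b c)" using S by blast
  have DP: "\<And>x. x \<in> projs D \<Longrightarrow> D x = x \<and> R x = x \<and> m x x = x"
  proof -
    fix x assume "x \<in> projs D"
    then obtain a where a: "x = D a" unfolding projs_def by blast
    have r: "R x = x" using S a by simp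
    have d: "D x = x" using S r by metis
    have "m x x = x" using S d by metis
    thus "D x = x \<and> R x = x \<and> m x x = x" using r d by simp
  qed
  have pp: "D p = p" "R p = p" "m p p = p" using DP assms(2) by auto
  have qq: "D q = q" "R q = q" "m q q = q" using DP assms(3) by auto
  define e where "e = D (m p q)"
  have e1: "e = m (m p e) p" using S pp unfolding e_def by metis
  have e2: "e = m (m q e) q" using S qq assms(4) unfolding e_def by metis
  have ep: "m e p = e" using e1 pp assoc by metis
  have eq: "m e q = e" using e2 qq assoc by metis
  have "m e (m p q) = m p q" using S unfolding e_def by metis
  hence pqe: "m p q = e" using ep eq assoc by metis
  have pqP: "m p q \<in> projs D" using pqe e_def unfolding projs_def by auto
  have Rpq: "R (m p q) = m p q" using S pqe e_def by metis
  have meet: "is_meet m D p q (m p q)"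
    unfolding is_meet_def proj_le_def
    using pqP assoc pp qq assms(4) by metis
  show ?thesis
  proof (intro conjI)
    show "\<exists>z. is_meet m D p q z" using meet by blast
    show "is_meet m D p q (m p q)" by (rule meet)
    show "is_meet m D p q (m q p)" using meet assms(4) by simp
    show "relF m D R p q = (p = q)"
      unfolding relF_def delta_def theta_def
      using pqe e_def Rpq pp by metis
  qed
qed

end
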